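(* Let $T$ be a real inner product space of dimension $n > 4$ and let $\mathcal{R}$ be the space of algebraic curvature tensors on $T$. Then the image of the quadratic map $\rho: S^3 T^* \to \Lambda^2 T^* \otimes \Lambda^2 T^*$, $\rho(A)_{ijkl} = -g^{ab} A_{ika}A_{jlb} + g^{ab} A_{ila}A_{jkb}$, is not all of $\mathcal{R}$. Consequently the requirement that the Riemann curvature tensor at each point lies in the image of $\rho$, which is necessary for a metric $g$ of dimension $n>4$ to be a Hessian metric, is a non-trivial condition.
   Context: A Riemannian metric $g$ is Hessian if around each point there are local coordinates $x$ and a function $\phi$ with $g_{ij} = \partial^2 \phi/\partial x_i\partial x_j$. It is known that if $g$ is Hessian, with dually flat connection $\overline{\nabla} = \nabla + A$ ($\nabla$ the Levi-Civita connection), then $A$ (with indices lowered by $g$) lies in $S^3T^*$ and the Riemann curvature satisfies $R_{ijkl} = -g^{ab}A_{ika}A_{jlb} + g^{ab}A_{ila}A_{jkb}$, i.e. $R = \rho(A)$ at each point. An algebraic curvature tensor is an element of $\Lambda^2T^*\otimes\Lambda^2T^*$ that is symmetric under exchange of the two pairs and satisfies the first Bianchi identity; $\dim\mathcal{R} = n^2(n^2-1)/12$. *)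

theory Defs
  imports "HOL-Analysis.Analysis"
begin

text \<open>Tensors on an n-dimensional real vector space T, written in components with
respect to a basis indexed by the finite type 'n (so n = CARD('n)).
The inner product is given by its Gram matrix g (symmetric, positive definite);
its inverse matrix supplies g^{ab}.\<close>

type_synonym 'n tensor3 = "'n \<Rightarrow> 'n \<Rightarrow> 'n \<Rightarrow> real"
type_synonym 'n tensor4 = "'n \<Rightarrow> 'n \<Rightarrow> 'n \<Rightarrow> 'n \<Rightarrow> real"

definition inner_product_matrix :: "real^'n^'n \<Rightarrow> bool" where
  "inner_product_matrix g \<longleftrightarrow> transpose g = g \<and> (\<forall>x. x \<noteq> 0 \<longrightarrow> x \<bullet> (g *v x) > 0)"

definition sym3 :: "'n tensor3 \<Rightarrow> bool" where
  "sym3 A \<longleftrightarrow> (\<forall>i j k. A i j k = A j i k \<and> A i j k = A i k j)"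

definition alg_curv :: "'n tensor4 \<Rightarrow> bool" where
  "alg_curv R \<longleftrightarrow>
     (\<forall>i j k l. R i j k l = - R j i k l) \<and>
     (\<forall>i j k l. R i j k l = - R i j l k) \<and>
     (\<forall>i j k l. R i j k l = R k l i j) \<and>
     (\<forall>i j k l. R i j k l + R j k i l + R k i j l = 0)"

definition rho :: "real^'n^'n \<Rightarrow> 'n tensor3 \<Rightarrow> 'n tensor4" where
  "rho g A = (\<lambda>i j k l.
      (\<Sum>a\<in>UNIV. \<Sum>b\<in>UNIV. matrix_inv g $ a $ b * (- A i k a * A j l b + A i l a * A j k b)))"

end

theory Submission
  imports Defs
begin

lemma not_onto_lowdim:
  fixes f :: "'b::euclidean_space \<Rightarrow> 'a::euclidean_space"
  assumes S: "subspace S" and T: "subspace T" and dimST: "dim S < dim T"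
    and df: "f differentiable_on S" and onto: "T \<subseteq> f ` S"
  shows False
proof -
  obtain BT where BT: "BT \<subseteq> T" "independent BT" "T \<subseteq> span BT" "card BT = dim T"
    by (rule basis_exists)
  obtain B where B: "BT \<subseteq> B" "independent B" "UNIV \<subseteq> span B"
    by (rule maximal_independent_subset_extend[of BT UNIV]) (use BT(2) in auto)
  obtain BS where BS: "BS \<subseteq> S" "independent BS" "S \<subseteq> span BS" "card BS = dim S"
    by (rule basis_exists)
  have finB: "finite B" and finBS: "finite BS" and finBT: "finite BT"
    using B(2) BS(2) BT(2) finiteI_independent by auto
  have cardB: "card B = DIM('a)"
    using basis_card_eq_dim[of B UNIV] B by simp
  obtain j where j: "j ` BS \<subseteq> BT" "inj_on j BS"
    using card_le_inj[OF finBS finBT] BS(4) BT(4) dimST by auto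
  define C where "C = B - BT"
  define fa where "fa x = (if x \<in> j ` BS then the_inv_into BS j x else 0)" for x
  obtain \<alpha> :: "'a \<Rightarrow> 'b" where la: "linear \<alpha>" and \<alpha>fa: "\<And>x. x \<in> B \<Longrightarrow> \<alpha> x = fa x"
    using linear_independent_extend \<open>independent B\<close> by fastforce
  have \<alpha>B: "\<forall>x\<in>B. \<alpha> x = (if x \<in> j ` BS then the_inv_into BS j x else 0)"
    using \<alpha>fa fa_def by simp
  define fb where "fb x = (if x \<in> C then x else 0)" for x
  obtain \<beta> :: "'a \<Rightarrow> 'a" where lb: "linear \<beta>" and \<beta>fb: "\<And>x. x \<in> B \<Longrightarrow> \<beta> x = fb x"
    using linear_independent_extend \<open>independent B\<close> by fastforce
  have \<beta>B: "\<forall>x\<in>B. \<beta> x = (if x \<in> C then x else 0)"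
    using \<beta>fb fb_def by simp
  have jB: "j ` BS \<subseteq> B" using j B by auto
  have \<alpha>j: "\<alpha> (j u) = u" if "u \<in> BS" for u
    using \<alpha>B jB that j(2) by (auto simp: the_inv_into_f_f)
  have \<alpha>C: "\<alpha> c = 0" if "c \<in> span C" for c
  proof (rule linear_eq_0_on_span[OF la _ that])
    fix x assume x: "x \<in> C"
    then have "x \<in> B" "x \<notin> BT" using C_def by auto
    moreover have "x \<notin> j ` BS" using j(1) \<open>x \<notin> BT\<close> by auto
    ultimately show "\<alpha> x = 0" using \<alpha>B by auto
  qed
  have \<beta>j: "\<beta> y = 0" if "y \<in> span (j ` BS)" for y
  proof (rule linear_eq_0_on_span[OF lb _ that])
    fix x assume x: "x \<in> j ` BS"
    then have "x \<in> B" "x \<in> BT" using j jB by auto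
    then show "\<beta> x = 0" using \<beta>B C_def by auto
  qed
  have \<beta>C: "\<beta> c = c" if "c \<in> span C" for c
    using linear_eq_on_span[OF lb linear_id, of C c] \<beta>B that C_def by auto
  have \<alpha>S: "\<alpha> x \<in> S" for x
  proof -
    have "\<alpha> ` B \<subseteq> span BS"
      using \<alpha>B BS j by (auto simp: span_base span_zero the_inv_into_into)
    then have "span (\<alpha> ` B) \<subseteq> span BS" by (simp add: span_minimal)
    moreover have "x \<in> span B" using B(3) by auto
    ultimately have "\<alpha> x \<in> span BS" using span_linear_image[OF la, of B] by auto
    moreover have "span BS \<subseteq> S" using BS(1) S by (simp add: span_minimal)
    ultimately show ?thesis by auto
  qed
  define D where "D = span (j ` BS \<union> C)"
  define F where "F x = f (\<alpha> x) + \<beta> x" for x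
  have d1: "dim D \<le> card (j ` BS \<union> C)"
    unfolding D_def by (rule dim_le_card) (use finBS finB C_def in auto)
  have d2: "card (j ` BS \<union> C) \<le> card (j ` BS) + card C" by (rule card_Un_le)
  have d3: "card (j ` BS) \<le> card BS" using card_image_le[OF finBS] by simp
  have d4: "card C = card B - card BT" unfolding C_def using B(1) finB
    by (simp add: card_Diff_subset finite_subset)
  have d5: "card BT \<le> card B" using card_mono[OF finB B(1)] .
  have "dim D < DIM('a)" using d1 d2 d3 d4 d5 BS(4) BT(4) cardB dimST by linarith
  then have negD: "negligible D" by (rule negligible_lowdim)
  have "\<alpha> differentiable_on D" by (rule linear_imp_differentiable_on[OF la])
  moreover have "f differentiable_on \<alpha> ` D"
    by (rule differentiable_on_subset[OF df]) (use \<alpha>S in auto)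
  ultimately have "(\<lambda>x. f (\<alpha> x)) differentiable_on D" by (rule differentiable_on_compose)
  then have "F differentiable_on D" unfolding F_def
    by (intro differentiable_on_add linear_imp_differentiable_on[OF lb])
  then have "negligible (F ` D)"
    by (rule negligible_differentiable_image_negligible[OF order_refl negD])
  moreover have "UNIV \<subseteq> F ` D"
  proof
    fix z :: 'a
    have "B = BT \<union> C" using B(1) C_def by auto
    then have "z \<in> span (BT \<union> C)" using B(3) by auto
    then obtain t c where z: "z = t + c" and t: "t \<in> span BT" and c: "c \<in> span C"
      unfolding span_Un by auto
    have "t \<in> T" using t BT(1) T span_minimal by blast
    then obtain s where s: "s \<in> S" "t = f s" using onto by auto
    have "s \<in> span BS" using s BS(3) by auto
    moreover have "\<alpha> ` j ` BS = BS" unfolding image_image using \<alpha>j by simp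
    ultimately have "s \<in> \<alpha> ` span (j ` BS)"
      using span_linear_image[OF la, of "j ` BS"] by simp
    then obtain y where y: "y \<in> span (j ` BS)" "s = \<alpha> y" by auto
    have xD: "y + c \<in> D" unfolding D_def
    proof (rule span_add)
      show "y \<in> span (j ` BS \<union> C)" using y(1) span_mono[of "j ` BS" "j ` BS \<union> C"] by blast
      show "c \<in> span (j ` BS \<union> C)" using c span_mono[of "C" "j ` BS \<union> C"] by blast
    qed
    have "F (y + c) = z"
      unfolding F_def using la lb y c z s \<alpha>C \<beta>j \<beta>C
      by (simp add: linear_add)
    then show "z \<in> F ` D" using xD by force
  qed
  ultimately have "negligible (UNIV :: 'a set)" using negligible_subset by blast
  then show False by simp
qed


definition T2 :: "nat \<Rightarrow> (nat \<times> nat) set" where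
  "T2 m = {(x,y). x < y \<and> y < m}"
definition T3 :: "nat \<Rightarrow> (nat \<times> nat \<times> nat) set" where
  "T3 m = {(x,y,z). x < y \<and> y < z \<and> z < m}"

lemma fin_T2: "finite (T2 m)"
  by (rule finite_subset[of _ "{..<m} \<times> {..<m}"]) (auto simp: T2_def)
lemma fin_T3: "finite (T3 m)"
  by (rule finite_subset[of _ "{..<m} \<times> {..<m} \<times> {..<m}"]) (auto simp: T3_def)

lemma card_T2: "2 * card (T2 m) + m = m * m"
proof (induction m)
  case 0 then show ?case by (simp add: T2_def)
next
  case (Suc m)
  have eq: "T2 (Suc m) = T2 m \<union> (\<lambda>x. (x,m)) ` {..<m}"
    by (auto simp: T2_def less_Suc_eq)
  have dj: "T2 m \<inter> (\<lambda>x. (x,m)) ` {..<m} = {}" by (auto simp: T2_def)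
  have "card (T2 (Suc m)) = card (T2 m) + m"
    unfolding eq by (subst card_Un_disjoint) (auto simp: fin_T2 dj card_image inj_on_def)
  then show ?case using Suc.IH by simp
qed

lemma card_T3: "6 * card (T3 m) + 3 * m * m = m * m * m + 2 * m"
proof (induction m)
  case 0
  have "T3 0 = {}" by (auto simp: T3_def)
  then show ?case by simp
next
  case (Suc m)
  have eq: "T3 (Suc m) = T3 m \<union> (\<lambda>(x,y). (x,y,m)) ` T2 m"
    by (auto simp: T3_def T2_def less_Suc_eq)
  have dj: "T3 m \<inter> (\<lambda>(x,y). (x,y,m)) ` T2 m = {}" by (auto simp: T3_def T2_def)
  have inj: "inj_on (\<lambda>(x,y). (x,y,m)) (T2 m)" by (rule inj_onI) auto
  have "card (T3 (Suc m)) = card (T3 m) + card (T2 m)"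
    unfolding eq by (subst card_Un_disjoint) (auto simp: fin_T2 fin_T3 dj card_image[OF inj])
  then show ?case using Suc.IH card_T2[of m] by (simp add: algebra_simps)
qed

definition P3 :: "nat \<Rightarrow> (nat \<times> nat \<times> nat) set" where
  "P3 n = {(a,b,c). a \<le> b \<and> b \<le> c \<and> c < n}"
definition In :: "nat \<Rightarrow> (nat \<times> nat \<times> nat) set" where
  "In n = {(a,b,c). a < n \<and> b < n \<and> c < n \<and> a \<noteq> b \<and> a \<noteq> c \<and> b \<le> c \<and> (b = c \<longrightarrow> a < b)}"

lemma fin_P3: "finite (P3 n)"
  by (rule finite_subset[of _ "{..<n} \<times> {..<n} \<times> {..<n}"]) (auto simp: P3_def)
lemma fin_In: "finite (In n)"
  by (rule finite_subset[of _ "{..<n} \<times> {..<n} \<times> {..<n}"]) (auto simp: In_def)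

lemma card_P3: "card (P3 n) = card (T3 (n+2))"
proof -
  have "T3 (n+2) = (\<lambda>(a,b,c). (a, b+1, c+2)) ` P3 n"
  proof
    show "T3 (n+2) \<subseteq> (\<lambda>(a,b,c). (a, b+1, c+2)) ` P3 n"
    proof
      fix t assume "t \<in> T3 (n+2)"
      then obtain x y z where t: "t = (x,y,z)" "x < y" "y < z" "z < n+2" by (auto simp: T3_def)
      then have "(x, y - 1, z - 2) \<in> P3 n" by (auto simp: P3_def)
      moreover have "t = (\<lambda>(a,b,c). (a, b+1, c+2)) (x, y - 1, z - 2)" using t by auto
      ultimately show "t \<in> (\<lambda>(a,b,c). (a, b+1, c+2)) ` P3 n" by blast
    qed
  qed (auto simp: T3_def P3_def)
  moreover have "inj_on (\<lambda>(a,b,c). (a, b+1, c+2)) (P3 n)" by (auto simp: inj_on_def)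
  ultimately show ?thesis by (simp add: card_image)
qed

lemma card_In: "card (In n) = 3 * card (T3 n) + card (T2 n)"
proof -
  define f1 where "f1 = (\<lambda>(x::nat,y::nat,z::nat). (x,y,z))"
  define f2 where "f2 = (\<lambda>(x::nat,y::nat,z::nat). (y,x,z))"
  define f3 where "f3 = (\<lambda>(x::nat,y::nat,z::nat). (z,x,y))"
  define f4 where "f4 = (\<lambda>(x::nat,y::nat). (x,y,y))"
  have eq: "In n = ((f1 ` T3 n \<union> f2 ` T3 n) \<union> f3 ` T3 n) \<union> f4 ` T2 n"
  proof
    show "In n \<subseteq> ((f1 ` T3 n \<union> f2 ` T3 n) \<union> f3 ` T3 n) \<union> f4 ` T2 n"
    proof
      fix t assume "t \<in> In n"
      then obtain a b c where t: "t = (a,b,c)" "a < n" "b < n" "c < n" "a \<noteq> b" "a \<noteq> c" "b \<le> c" "b = c \<longrightarrow> a < b"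
        by (auto simp: In_def)
      show "t \<in> ((f1 ` T3 n \<union> f2 ` T3 n) \<union> f3 ` T3 n) \<union> f4 ` T2 n"
      proof (cases "b = c")
        case True
        then have "t = f4 (a,b)" "(a,b) \<in> T2 n" using t by (auto simp: f4_def T2_def)
        then show ?thesis by blast
      next
        case False
        then have bc: "b < c" using t by auto
        consider "a < b" | "b < a \<and> a < c" | "c < a" using t bc by linarith
        then show ?thesis
        proof cases
          case 1
          then have "t = f1 (a,b,c)" "(a,b,c) \<in> T3 n" using t bc by (auto simp: f1_def T3_def)
          then show ?thesis by blast
        next
          case 2
          then have "t = f2 (b,a,c)" "(b,a,c) \<in> T3 n" using t bc by (auto simp: f2_def T3_def)
          then show ?thesis by blast
        next
          case 3
          then have "t = f3 (b,c,a)" "(b,c,a) \<in> T3 n" using t bc by (auto simp: f3_def T3_def)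
          then show ?thesis by blast
        qed
      qed
    qed
  qed (auto simp: In_def T3_def T2_def f1_def f2_def f3_def f4_def)
  have i1: "inj_on f1 (T3 n)" "inj_on f2 (T3 n)" "inj_on f3 (T3 n)" "inj_on f4 (T2 n)"
    by (auto simp: inj_on_def f1_def f2_def f3_def f4_def)
  have c1: "card (f1 ` T3 n) = card (T3 n)" "card (f2 ` T3 n) = card (T3 n)"
    "card (f3 ` T3 n) = card (T3 n)" "card (f4 ` T2 n) = card (T2 n)"
    using i1 by (simp_all add: card_image)
  have fin: "finite (f1 ` T3 n)" "finite (f2 ` T3 n)" "finite (f3 ` T3 n)" "finite (f4 ` T2 n)"
    using fin_T3 fin_T2 by auto
  have d1: "f1 ` T3 n \<inter> f2 ` T3 n = {}" by (auto simp: f1_def f2_def T3_def)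
  have d2: "(f1 ` T3 n \<union> f2 ` T3 n) \<inter> f3 ` T3 n = {}" by (auto simp: f1_def f2_def f3_def T3_def)
  have d3: "((f1 ` T3 n \<union> f2 ` T3 n) \<union> f3 ` T3 n) \<inter> f4 ` T2 n = {}"
    by (auto simp: f1_def f2_def f3_def f4_def T3_def T2_def)
  show ?thesis unfolding eq
    using fin d1 d2 d3 c1 by (simp add: card_Un_disjoint)
qed

lemma card_P3_less_In:
  assumes "n > 4" shows "card (P3 n) < card (In n)"
proof -
  define k where "k = n - 5"
  have n: "n = k + 5" using assms by (simp add: k_def)
  have b: "6 * card (T3 n) + 3 * n * n = n * n * n + 2 * n" by (rule card_T3)
  have c: "2 * card (T2 n) + n = n * n" by (rule card_T2)
  have a': "6 * card (T3 (k+7)) + 3 * (k+7) * (k+7) = (k+7) * (k+7) * (k+7) + 2 * (k+7)"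
    by (rule card_T3)
  have b': "6 * card (T3 (k+5)) + 3 * (k+5) * (k+5) = (k+5) * (k+5) * (k+5) + 2 * (k+5)"
    using b unfolding n .
  have c': "2 * card (T2 (k+5)) + (k+5) = (k+5) * (k+5)" using c unfolding n .
  have X: "card (T3 (k+7)) < 3 * card (T3 (k+5)) + card (T2 (k+5))"
    using a' b' c' by (simp add: algebra_simps; linarith?)
  have n2: "n + 2 = k + 7" using n by simp
  show ?thesis unfolding card_P3 card_In n2 using X by (simp add: n)
qed


definition vec3 :: "('n::finite) tensor3 \<Rightarrow> real^('n\<times>'n\<times>'n)" where
  "vec3 A = (\<chi> x. A (fst x) (fst (snd x)) (snd (snd x)))"
definition unvec3 :: "real^(('n::finite)\<times>'n\<times>'n) \<Rightarrow> 'n tensor3" where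
  "unvec3 v = (\<lambda>i j k. v $ (i,j,k))"
definition vec4 :: "('n::finite) tensor4 \<Rightarrow> real^('n\<times>'n\<times>'n\<times>'n)" where
  "vec4 R = (\<chi> x. R (fst x) (fst (snd x)) (fst (snd (snd x))) (snd (snd (snd x))))"
definition unvec4 :: "real^(('n::finite)\<times>'n\<times>'n\<times>'n) \<Rightarrow> 'n tensor4" where
  "unvec4 v = (\<lambda>i j k l. v $ (i,j,k,l))"

lemma unvec3_vec3[simp]: "unvec3 (vec3 A) = A"
  by (simp add: vec3_def unvec3_def)
lemma vec4_unvec4[simp]: "vec4 (unvec4 v) = v"
  by (simp add: vec4_def unvec4_def vec_eq_iff)

definition Bil :: "real^('n::finite)^'n \<Rightarrow> real^('n\<times>'n\<times>'n) \<Rightarrow> real^('n\<times>'n\<times>'n) \<Rightarrow> real^('n\<times>'n\<times>'n\<times>'n)" where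
  "Bil M u w = (\<chi> x. \<Sum>a\<in>UNIV. \<Sum>b\<in>UNIV. M $ a $ b *
     (- u $ (fst x, fst (snd (snd x)), a) * w $ (fst (snd x), snd (snd (snd x)), b)
      + u $ (fst x, snd (snd (snd x)), a) * w $ (fst (snd x), fst (snd (snd x)), b)))"

lemma rho_Bil: "vec4 (rho g (unvec3 v)) = Bil (matrix_inv g) v v"
  by (simp add: vec4_def rho_def unvec3_def Bil_def)

lemma bilinear_Bil: "bilinear (Bil M)"
  unfolding bilinear_def
proof (intro conjI allI)
  fix x y
  show "linear (Bil M x)"
    by (rule linearI) (simp_all add: Bil_def vec_eq_iff algebra_simps sum.distrib[symmetric] sum_distrib_left)
  show "linear (\<lambda>x. Bil M x y)"
    by (rule linearI) (simp_all add: Bil_def vec_eq_iff algebra_simps sum.distrib[symmetric] sum_distrib_left)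
qed

lemma diff_Bil: "(\<lambda>v. Bil M v v) differentiable_on S"
proof -
  have bb: "bounded_bilinear (Bil M)"
    using bilinear_Bil bilinear_conv_bounded_bilinear by blast
  have "((\<lambda>v. Bil M v v) has_derivative (\<lambda>h. Bil M x h + Bil M h x)) (at x within S)" for x
    using bounded_bilinear.FDERIV[OF bb has_derivative_ident has_derivative_ident] by simp
  then show ?thesis unfolding differentiable_on_def differentiable_def by blast
qed


lemma unvec4_vec4[simp]: "unvec4 (vec4 R) = R"
  by (simp add: vec4_def unvec4_def)


definition S3 :: "(real^(('n::finite)\<times>'n\<times>'n)) set" where
  "S3 = {v. sym3 (unvec3 v)}"

lemma subspace_S3: "subspace S3"
  unfolding subspace_def S3_def sym3_def unvec3_def by auto

definition srt :: "nat \<times> nat \<times> nat \<Rightarrow> nat \<times> nat \<times> nat" where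
  "srt t = (case t of (x,y,z) \<Rightarrow>
     if x \<le> y then (if y \<le> z then (x,y,z) else if x \<le> z then (x,z,y) else (z,x,y))
     else (if x \<le> z then (y,x,z) else if y \<le> z then (y,z,x) else (z,y,x)))"

lemma srt_perm: "srt (x,y,z) \<in> {(x,y,z),(x,z,y),(y,x,z),(y,z,x),(z,x,y),(z,y,x)}"
  by (auto simp: srt_def)

lemma srt_P3: "x < n \<Longrightarrow> y < n \<Longrightarrow> z < n \<Longrightarrow> srt (x,y,z) \<in> P3 n"
  by (auto simp: srt_def P3_def)

definition sig :: "(('n::finite) \<Rightarrow> nat) \<Rightarrow> nat \<times> nat \<times> nat \<Rightarrow> real^('n\<times>'n\<times>'n)" where
  "sig h t = (\<chi> x. if srt (h (fst x), h (fst (snd x)), h (snd (snd x))) = t then 1 else 0)"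

lemma perm_eq:
  fixes v :: "real^(('n::finite)\<times>'n\<times>'n)"
  assumes s1: "\<And>a b c. v $ (a,b,c) = v $ (b,a,c)" and s2: "\<And>a b c. v $ (a,b,c) = v $ (a,c,b)"
    and p: "p \<in> {(i,j,k),(i,k,j),(j,i,k),(j,k,i),(k,i,j),(k,j,i)}"
  shows "v $ p = v $ (i,j,k)"
proof -
  from p consider "p = (i,j,k)" | "p = (i,k,j)" | "p = (j,i,k)" | "p = (j,k,i)" | "p = (k,i,j)" | "p = (k,j,i)"
    by blast
  then show ?thesis by cases (metis s1 s2)+
qed

lemma dim_S3:
  fixes h :: "'n::finite \<Rightarrow> nat"
  assumes h: "bij_betw h UNIV {0..<CARD('n)}"
  shows "dim (S3 :: (real^('n\<times>'n\<times>'n)) set) \<le> card (P3 CARD('n))"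
proof -
  let ?n = "CARD('n)"
  define u where "u = inv_into UNIV h"
  have hl: "h i < ?n" for i using h by (auto simp: bij_betw_def)
  have uh: "u (h i) = i" for i using h by (simp add: u_def bij_betw_def inv_into_f_f)
  define u3 where "u3 t = (u (fst t), u (fst (snd t)), u (snd (snd t)))" for t
  have rep: "v = (\<Sum>t\<in>P3 ?n. (v $ u3 t) *\<^sub>R sig h t)" if v: "v \<in> S3" for v :: "real^('n\<times>'n\<times>'n)"
  proof -
    have s1: "\<And>a b c. v $ (a,b,c) = v $ (b,a,c)" and s2: "\<And>a b c. v $ (a,b,c) = v $ (a,c,b)"
      using v by (auto simp: S3_def sym3_def unvec3_def)
    show ?thesis
    proof (subst vec_eq_iff, rule allI)
      fix x :: "'n \<times> 'n \<times> 'n"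
      obtain i j k where x: "x = (i,j,k)" by (cases x) auto
      let ?s = "srt (h i, h j, h k)"
      have "(\<Sum>t\<in>P3 ?n. (v $ u3 t) *\<^sub>R sig h t) $ x
          = (\<Sum>t\<in>P3 ?n. if ?s = t then v $ u3 t else 0)"
        unfolding sum_component by (intro sum.cong) (auto simp: sig_def x)
      also have "\<dots> = v $ u3 ?s"
        using fin_P3 srt_P3[OF hl hl hl] by simp
      also have "\<dots> = v $ (i,j,k)"
      proof (rule perm_eq[OF s1 s2])
        have "u3 ?s \<in> u3 ` {(h i,h j,h k),(h i,h k,h j),(h j,h i,h k),(h j,h k,h i),(h k,h i,h j),(h k,h j,h i)}"
          using srt_perm by blast
        then show "u3 ?s \<in> {(i,j,k),(i,k,j),(j,i,k),(j,k,i),(k,i,j),(k,j,i)}"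
          by (simp add: u3_def uh)
      qed
      finally show "v $ x = (\<Sum>t\<in>P3 ?n. (v $ u3 t) *\<^sub>R sig h t) $ x" using x by simp
    qed
  qed
  have "(S3 :: (real^('n\<times>'n\<times>'n)) set) \<subseteq> span (sig h ` P3 ?n)"
  proof
    fix v :: "real^('n\<times>'n\<times>'n)" assume "v \<in> S3"
    then have "v = (\<Sum>t\<in>P3 ?n. (v $ u3 t) *\<^sub>R sig h t)" by (rule rep)
    also have "\<dots> \<in> span (sig h ` P3 ?n)"
      by (intro span_sum span_scale span_base imageI)
    finally show "v \<in> span (sig h ` P3 ?n)" .
  qed
  then have "dim (S3 :: (real^('n\<times>'n\<times>'n)) set) \<le> card (sig h ` P3 ?n)"
    by (rule dim_le_card) (simp add: fin_P3)
  also have "\<dots> \<le> card (P3 ?n)" using fin_P3 by (rule card_image_le)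
  finally show ?thesis .
qed



definition dl :: "'n \<Rightarrow> 'n \<Rightarrow> real" where "dl p i = (if i = p then 1 else 0)"
definition ww :: "('n \<Rightarrow> real) \<Rightarrow> ('n \<Rightarrow> real) \<Rightarrow> 'n \<Rightarrow> 'n \<Rightarrow> real" where
  "ww a b i j = a i * b j - b i * a j"
definition ZZ :: "('n \<Rightarrow> real) \<Rightarrow> ('n \<Rightarrow> real) \<Rightarrow> ('n \<Rightarrow> real) \<Rightarrow> 'n tensor4" where
  "ZZ a b c = (\<lambda>i j k l. ww a b i j * ww a c k l + ww a c i j * ww a b k l)"

lemma alg_curv_ZZ: "alg_curv (ZZ a b c)"
  unfolding alg_curv_def ZZ_def ww_def
  by (intro conjI allI; simp add: algebra_simps)



lemma indep_diag:
  fixes X :: "'i \<Rightarrow> real^'c" and p :: "'i \<Rightarrow> 'c"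
  assumes fin: "finite I"
    and diag: "\<And>a b. a \<in> I \<Longrightarrow> b \<in> I \<Longrightarrow> X b $ p a = (if b = a then d a else 0)"
    and nz: "\<And>a. a \<in> I \<Longrightarrow> d a \<noteq> 0"
  shows "inj_on X I" "independent (X ` I)"
proof -
  show inj: "inj_on X I"
  proof (rule inj_onI)
    fix a b assume ab: "a \<in> I" "b \<in> I" "X a = X b"
    have "X a $ p a = d a" using diag[OF ab(1) ab(1)] by simp
    then have "X b $ p a = d a" by (simp only: ab(3))
    moreover have "X b $ p a = (if b = a then d a else 0)" by (rule diag[OF ab(1) ab(2)])
    ultimately show "a = b" using nz[OF ab(1)] by (metis (full_types))
  qed
  show "independent (X ` I)"
    unfolding independent_explicit
  proof (intro conjI allI impI ballI)
    show "finite (X ` I)" using fin by simp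
    fix c v assume sum0: "(\<Sum>v\<in>X ` I. c v *\<^sub>R v) = 0" and v: "v \<in> X ` I"
    then obtain a where a: "a \<in> I" "v = X a" by auto
    have "(\<Sum>v\<in>X ` I. c v *\<^sub>R v) = (\<Sum>b\<in>I. c (X b) *\<^sub>R X b)"
      by (rule sum.reindex[OF inj, unfolded comp_def])
    then have "0 = (\<Sum>b\<in>I. c (X b) *\<^sub>R X b) $ p a" using sum0 by simp
    also have "\<dots> = (\<Sum>b\<in>I. if b = a then c (X b) * d a else 0)"
      unfolding sum_component by (intro sum.cong) (auto simp: diag a)
    also have "\<dots> = c (X a) * d a" using fin a by simp
    finally show "c v = 0" using nz[OF a(1)] a by simp
  qed
qed



lemma curv_lin:
  assumes R: "alg_curv R" and S: "alg_curv S"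
  shows "alg_curv (\<lambda>i j k l. a * R i j k l + b * S i j k l)"
  unfolding alg_curv_def
proof (intro conjI allI)
  have r1: "\<And>i j k l. R i j k l = - R j i k l" and r2: "\<And>i j k l. R i j k l = - R i j l k"
    and r3: "\<And>i j k l. R i j k l = R k l i j" and r4: "\<And>i j k l. R i j k l + R j k i l + R k i j l = 0"
    using R unfolding alg_curv_def by blast+
  have s1: "\<And>i j k l. S i j k l = - S j i k l" and s2: "\<And>i j k l. S i j k l = - S i j l k"
    and s3: "\<And>i j k l. S i j k l = S k l i j" and s4: "\<And>i j k l. S i j k l + S j k i l + S k i j l = 0"
    using S unfolding alg_curv_def by blast+
  fix i j k l
  show "a * R i j k l + b * S i j k l = - (a * R j i k l + b * S j i k l)"
    using r1[of i j k l] s1[of i j k l] by (simp add: algebra_simps)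
  show "a * R i j k l + b * S i j k l = - (a * R i j l k + b * S i j l k)"
    using r2[of i j k l] s2[of i j k l] by (simp add: algebra_simps)
  show "a * R i j k l + b * S i j k l = a * R k l i j + b * S k l i j"
    using r3[of i j k l] s3[of i j k l] by simp
  have "a * (R i j k l + R j k i l + R k i j l) + b * (S i j k l + S j k i l + S k i j l) = 0"
    using r4[of i j k l] s4[of i j k l] by simp
  then show "a * R i j k l + b * S i j k l + (a * R j k i l + b * S j k i l) + (a * R k i j l + b * S k i j l) = 0"
    by (simp add: algebra_simps)
qed

lemma subspace_curv: "subspace {v :: real^(('n::finite)\<times>'n\<times>'n\<times>'n). alg_curv (unvec4 v)}"
  unfolding subspace_def
proof (intro conjI ballI allI)
  have "alg_curv (unvec4 (0::real^('n\<times>'n\<times>'n\<times>'n)))"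
    unfolding alg_curv_def unvec4_def by simp
  then show "0 \<in> {v :: real^('n\<times>'n\<times>'n\<times>'n). alg_curv (unvec4 v)}" by simp
next
  fix x y :: "real^('n\<times>'n\<times>'n\<times>'n)"
  assume x: "x \<in> {v. alg_curv (unvec4 v)}" and y: "y \<in> {v. alg_curv (unvec4 v)}"
  have "unvec4 (x + y) = (\<lambda>i j k l. 1 * unvec4 x i j k l + 1 * unvec4 y i j k l)" by (simp add: unvec4_def)
  then show "x + y \<in> {v. alg_curv (unvec4 v)}" using curv_lin[of "unvec4 x" "unvec4 y" 1 1] x y by simp
next
  fix c :: real and x :: "real^('n\<times>'n\<times>'n\<times>'n)"
  assume x: "x \<in> {v. alg_curv (unvec4 v)}"
  have "unvec4 (c *\<^sub>R x) = (\<lambda>i j k l. c * unvec4 x i j k l + 0 * unvec4 x i j k l)" by (simp add: unvec4_def)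
  then show "c *\<^sub>R x \<in> {v. alg_curv (unvec4 v)}" using curv_lin[of "unvec4 x" "unvec4 x" c 0] x by simp
qed


theorem mainTheorem2:
  fixes g :: "real^'n^'n"
  assumes "inner_product_matrix g"
    and "CARD('n) > 4"
  shows "\<exists>R :: 'n tensor4. alg_curv R \<and> \<not> (\<exists>A. sym3 A \<and> rho g A = R)"
proof (rule ccontr)
  assume "\<not> (\<exists>R :: 'n tensor4. alg_curv R \<and> \<not> (\<exists>A. sym3 A \<and> rho g A = R))"
  then have onto: "\<And>R :: 'n tensor4. alg_curv R \<Longrightarrow> \<exists>A. sym3 A \<and> rho g A = R" by blast
  let ?n = "CARD('n)"
  obtain h :: "'n \<Rightarrow> nat" where h: "bij_betw h UNIV {0..<?n}"
    using ex_bij_betw_finite_nat[of "UNIV::'n set"] by auto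
  define u where "u = inv_into UNIV h"
  have hu: "h (u a) = a" if "a < ?n" for a
    using h that by (auto simp: u_def bij_betw_def f_inv_into_f)
  have uinj: "(u a = u b) = (a = b)" if "a < ?n" "b < ?n" for a b
    using hu[OF that(1)] hu[OF that(2)] by metis
  have dlu: "dl (u a) (u b) = (if a = b then 1 else 0)" if "a < ?n" "b < ?n" for a b
    using uinj[OF that] by (auto simp: dl_def)
  define X where "X t = vec4 (ZZ (dl (u (fst t))) (dl (u (fst (snd t)))) (dl (u (snd (snd t)))))" for t
  define p where "p t = (u (fst t), u (fst (snd t)), u (fst t), u (snd (snd t)))" for t
  define d where "d t = (if fst (snd t) = snd (snd t) then 2 else (1::real))" for t :: "nat \<times> nat \<times> nat"
  have diag: "X t $ p s = (if t = s then d s else 0)" if s: "s \<in> In ?n" and t: "t \<in> In ?n" for s t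
  proof -
    obtain a b c where s': "s = (a,b,c)" by (cases s) auto
    obtain a' b' c' where t': "t = (a',b',c')" by (cases t) auto
    have bd: "a < ?n" "b < ?n" "c < ?n" "a' < ?n" "b' < ?n" "c' < ?n"
      and cs: "a \<noteq> b" "a \<noteq> c" "b \<le> c" "b = c \<longrightarrow> a < b"
        "a' \<noteq> b'" "a' \<noteq> c'" "b' \<le> c'" "b' = c' \<longrightarrow> a' < b'"
      using s t s' t' by (auto simp: In_def)
    have val: "X t $ p s =
      ((if a' = a then 1 else 0) * (if b' = b then 1 else 0) - (if b' = a then 1 else 0) * (if a' = b then 1 else 0)) *
      ((if a' = a then 1 else 0) * (if c' = c then 1 else 0) - (if c' = a then 1 else 0) * (if a' = c then 1 else 0)) +
      ((if a' = a then 1 else 0) * (if c' = b then 1 else 0) - (if c' = a then 1 else 0) * (if a' = b then 1 else 0)) *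
      ((if a' = a then 1 else 0) * (if b' = c then 1 else 0) - (if b' = a then 1 else 0) * (if a' = c then 1 else 0))"
      unfolding s' t' X_def p_def vec4_def ZZ_def ww_def
      by (simp only: vec_lambda_beta fst_conv snd_conv dlu bd)
    show ?thesis
    proof (cases "a' = a")
      case True
      then have "X t $ p s = (if b' = b then 1 else 0) * (if c' = c then 1 else 0) + (if c' = b then 1 else 0) * (if b' = c then 1 else 0)"
        using val cs by simp
      then show ?thesis using True cs s' t' by (auto simp: d_def)
    next
      case False
      have "X t $ p s = 0"
      proof (cases "b' = a \<and> c' = a \<and> a' = b \<and> a' = c")
        case True
        then show ?thesis using cs by auto
      next
        case F2: False
        then show ?thesis using val False by auto
      qed
      then show ?thesis using False s' t' by auto
    qed
  qed
  have indep: "inj_on X (In ?n)" "independent (X ` In ?n)"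
    using indep_diag[OF fin_In diag] by (auto simp: d_def)
  define T where "T = span (X ` In ?n)"
  have dimT: "dim T = card (In ?n)"
    unfolding T_def using indep by (simp add: dim_eq_card_independent card_image)
  have dimS: "dim (S3 :: (real^('n\<times>'n\<times>'n)) set) < dim T"
    using dim_S3[OF h] card_P3_less_In[OF assms(2)] dimT by linarith
  have TC: "T \<subseteq> {v. alg_curv (unvec4 v)}"
    unfolding T_def by (rule span_minimal[OF _ subspace_curv]) (auto simp: X_def alg_curv_ZZ)
  have "T \<subseteq> (\<lambda>v. Bil (matrix_inv g) v v) ` S3"
  proof
    fix t assume "t \<in> T"
    then have "alg_curv (unvec4 t)" using TC by auto
    then obtain A where A: "sym3 A" "rho g A = unvec4 t" using onto by blast
    have "t = vec4 (rho g (unvec3 (vec3 A)))" using A by simp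
    also have "\<dots> = Bil (matrix_inv g) (vec3 A) (vec3 A)" by (rule rho_Bil)
    finally show "t \<in> (\<lambda>v. Bil (matrix_inv g) v v) ` S3"
      using A by (auto simp: S3_def)
  qed
  then show False
    using not_onto_lowdim[OF subspace_S3 _ dimS diff_Bil] unfolding T_def by (simp add: subspace_span)
qed


end
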